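(* For every $\delta=1/k$ ($k\in\mathbb N$) and $\xi>0$, $$\|N_\xi(1-\pi_\delta)\|_{L^1\to L^1}\le\frac12\,\delta\,\xi^{-1}\,\mathrm{Var}(\rho).$$
   Context: $\rho$ is a function of bounded variation supported in $[-1/2,1/2]$ with $\int\rho=1$, $\rho_\xi(x)=\xi^{-1}\rho(x/\xi)$, and $\mathrm{Var}$ denotes total variation. With $\pi(x)=\min_{i\in\mathbb Z}|x-2i|$, $N_\xi f=\pi_*(\rho_\xi*\hat f)$ for $f\in L^1([0,1])$, where $\hat f$ is $f$ extended by $0$ outside $[0,1]$ and $\pi_*$ is the pushforward by $\pi$. $\pi_\delta$ is the Ulam projection: on each interval of the partition of $[0,1]$ into $k$ intervals of length $\delta$, $\pi_\delta f$ equals the average of $f$ on that interval (conditional expectation). *)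

theory Defs
  imports "HOL-Analysis.Analysis"
begin

definition variation_sums :: "(real \<Rightarrow> real) \<Rightarrow> real set" where
  "variation_sums g = {(\<Sum>i<n. \<bar>g (x (Suc i)) - g (x i)\<bar>) | (x :: nat \<Rightarrow> real) n.
       \<forall>i<n. x i \<le> x (Suc i)}"

definition bounded_variation :: "(real \<Rightarrow> real) \<Rightarrow> bool" where
  "bounded_variation g \<longleftrightarrow> bdd_above (variation_sums g)"

definition Var :: "(real \<Rightarrow> real) \<Rightarrow> real" where
  "Var g = Sup (variation_sums g)"

definition rho_scaled :: "(real \<Rightarrow> real) \<Rightarrow> real \<Rightarrow> real \<Rightarrow> real" where
  "rho_scaled \<rho> \<xi> x = \<rho> (x / \<xi>) / \<xi>"

definition pi_fold :: "real \<Rightarrow> real" where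
  "pi_fold x = Inf {\<bar>x - 2 * of_int i\<bar> | i :: int. True}"

definition ext0 :: "(real \<Rightarrow> real) \<Rightarrow> real \<Rightarrow> real" where
  "ext0 f x = (if x \<in> {0..1} then f x else 0)"

definition conv :: "(real \<Rightarrow> real) \<Rightarrow> (real \<Rightarrow> real) \<Rightarrow> real \<Rightarrow> real" where
  "conv g h x = integral UNIV (\<lambda>t. g (x - t) * h t)"

(* pushforward of a density g by pi_fold; since |pi_fold'| = 1 a.e., the density
   of the pushforward at y is the sum of g over the preimage of y *)
definition pushforward_pi :: "(real \<Rightarrow> real) \<Rightarrow> real \<Rightarrow> real" where
  "pushforward_pi g y = (if y \<in> {0..1} then infsum g {x. pi_fold x = y} else 0)"

definition N_op :: "(real \<Rightarrow> real) \<Rightarrow> real \<Rightarrow> (real \<Rightarrow> real) \<Rightarrow> real \<Rightarrow> real" where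
  "N_op \<rho> \<xi> f = pushforward_pi (conv (rho_scaled \<rho> \<xi>) (ext0 f))"

(* Ulam projection onto the partition of [0,1] into k intervals of length 1/k:
   the intervals are [j/k,(j+1)/k), the last one closed. *)
definition ulam :: "nat \<Rightarrow> (real \<Rightarrow> real) \<Rightarrow> real \<Rightarrow> real" where
  "ulam k f x = (if x \<in> {0..1} then
      (let j = min (nat \<lfloor>x * real k\<rfloor>) (k - 1) in
        real k * integral {real j / real k .. real (Suc j) / real k} f)
    else 0)"

definition L1norm :: "(real \<Rightarrow> real) \<Rightarrow> real" where
  "L1norm f = integral {0..1} (\<lambda>x. \<bar>f x\<bar>)"

end

theory Submission
  imports Defs
begin



lemma sigma_finite_lebesgue: "sigma_finite_measure (lebesgue :: real measure)"
proof
  obtain A :: "real set set" where A: "countable A" "A \<subseteq> sets lborel" "\<Union>A = space lborel" "\<forall>a\<in>A. emeasure lborel a \<noteq> \<infinity>"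
    using lborel.sigma_finite_countable by blast
  have E: "\<forall>a\<in>A. emeasure lebesgue a = emeasure lborel a" using A(2) by (auto simp: subset_eq)
  show "\<exists>A::real set set. countable A \<and> A \<subseteq> sets lebesgue \<and> \<Union> A = space lebesgue \<and> (\<forall>a\<in>A. emeasure lebesgue a \<noteq> \<infinity>)"
  proof (rule exI[where x=A], intro conjI)
    show "countable A" using A by simp
    show "A \<subseteq> sets lebesgue" using A(2) by auto
    show "\<Union> A = space lebesgue" using A(3) by simp
    show "\<forall>a\<in>A. emeasure lebesgue a \<noteq> \<infinity>" using A(4) E by simp
  qed
qed

interpretation leb: sigma_finite_measure "lebesgue :: real measure" by (rule sigma_finite_lebesgue)
interpretation leb_pair: pair_sigma_finite "lebesgue :: real measure" "lebesgue :: real measure" ..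

lemma id_leb_borel[measurable]: "(\<lambda>x::real. x) \<in> lebesgue \<rightarrow>\<^sub>M borel" by (rule measurable_completion) simp

lemma borel_leb: "(g::real\<Rightarrow>real) \<in> borel_measurable borel \<Longrightarrow> g \<in> borel_measurable lebesgue"
  by (rule measurable_completion) simp

lemma leb_to_borel: "g \<in> M \<rightarrow>\<^sub>M (lebesgue::real measure) \<Longrightarrow> g \<in> M \<rightarrow>\<^sub>M borel"
  using measurable_compose[OF _ id_leb_borel] by simp

lemma meas_test:
  fixes r f :: "real \<Rightarrow> real"
  assumes [measurable]: "r \<in> borel_measurable borel" and f[measurable]: "f \<in> borel_measurable lebesgue"
  shows "(\<lambda>p::(real\<times>real)\<times>real. f (snd (fst p)) * \<bar>r (fst (fst p) - snd (fst p)) - r (fst (fst p) - snd p)\<bar>) \<in> borel_measurable ((lebesgue \<Otimes>\<^sub>M lebesgue) \<Otimes>\<^sub>M lebesgue)"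
proof -
  have [measurable]: "(\<lambda>p::(real\<times>real)\<times>real. fst (fst p)) \<in> borel_measurable ((lebesgue \<Otimes>\<^sub>M lebesgue) \<Otimes>\<^sub>M lebesgue)"
    by (rule leb_to_borel) measurable
  have [measurable]: "(\<lambda>p::(real\<times>real)\<times>real. snd (fst p)) \<in> borel_measurable ((lebesgue \<Otimes>\<^sub>M lebesgue) \<Otimes>\<^sub>M lebesgue)"
    by (rule leb_to_borel) measurable
  have [measurable]: "(\<lambda>p::(real\<times>real)\<times>real. snd p) \<in> borel_measurable ((lebesgue \<Otimes>\<^sub>M lebesgue) \<Otimes>\<^sub>M lebesgue)"
    by (rule leb_to_borel) measurable
  have a: "(\<lambda>p::(real\<times>real)\<times>real. r (fst (fst p) - snd (fst p))) \<in> borel_measurable ((lebesgue \<Otimes>\<^sub>M lebesgue) \<Otimes>\<^sub>M lebesgue)"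
    by (rule measurable_compose[OF _ assms(1)]) measurable
  have b: "(\<lambda>p::(real\<times>real)\<times>real. r (fst (fst p) - snd p)) \<in> borel_measurable ((lebesgue \<Otimes>\<^sub>M lebesgue) \<Otimes>\<^sub>M lebesgue)"
    by (rule measurable_compose[OF _ assms(1)]) measurable
  have c: "(\<lambda>p::(real\<times>real)\<times>real. f (snd (fst p))) \<in> borel_measurable ((lebesgue \<Otimes>\<^sub>M lebesgue) \<Otimes>\<^sub>M lebesgue)"
    by (rule measurable_compose[OF _ f]) measurable
  note a[measurable] b[measurable] c[measurable]
  show ?thesis by measurable
qed



lemma var_sum_le:
  assumes bv: "bounded_variation g" and m: "\<forall>i<n. p i \<le> p (Suc i)"
  shows "(\<Sum>i<n. \<bar>g (p (Suc i)) - g (p i)\<bar>) \<le> Var g"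
  unfolding Var_def
  by (rule cSup_upper) (use bv m in \<open>auto simp: bounded_variation_def variation_sums_def\<close>)

lemma Var_nonneg: assumes bv: "bounded_variation g" shows "0 \<le> Var g"
  using var_sum_le[OF bv, of 0 id] by simp

lemma bv_borel:
  fixes g :: "real \<Rightarrow> real"
  assumes bv: "bounded_variation g"
  shows "g \<in> borel_measurable borel"
proof -
  define VS where "VS x = {(\<Sum>i<n. \<bar>g (p (Suc i)) - g (p i)\<bar>) | (p :: nat \<Rightarrow> real) n.
       (\<forall>i<n. p i \<le> p (Suc i)) \<and> (\<forall>i\<le>n. p i \<le> x)}" for x
  define P where "P x = Sup (VS x)" for x
  have sub: "VS x \<subseteq> variation_sums g" for x unfolding VS_def variation_sums_def by blast
  have bdd: "bdd_above (VS x)" for x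
    using bv sub unfolding bounded_variation_def by (meson bdd_above_mono)
  have ne: "VS x \<noteq> {}" for x
  proof -
    have "(\<Sum>i<0. \<bar>g ((\<lambda>_. x) (Suc i)) - g ((\<lambda>_. x) i)\<bar>) \<in> VS x" unfolding VS_def
      by (rule CollectI, rule exI[of _ "\<lambda>_. x"], rule exI[of _ 0]) simp
    then show ?thesis by blast
  qed
  have monoP: "mono P"
  proof
    fix x y :: real assume "x \<le> y"
    then have "VS x \<subseteq> VS y" unfolding VS_def by (smt (verit, best) Collect_mono_iff)
    then show "P x \<le> P y" unfolding P_def using ne bdd by (meson cSup_subset_mono)
  qed
  have monoQ: "mono (\<lambda>x. P x - g x)"
  proof
    fix x y :: real assume xy: "x \<le> y"
    have "S \<le> P y - (g y - g x)" if "S \<in> VS x" for S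
    proof -
      obtain p n where S: "S = (\<Sum>i<n. \<bar>g (p (Suc i)) - g (p i)\<bar>)" and m: "\<forall>i<n. p i \<le> p (Suc i)"
        and le: "\<forall>i\<le>n. p i \<le> x"
        using \<open>S \<in> VS x\<close> unfolding VS_def by blast
      define p' where "p' i = (if i \<le> n then p i else if i = Suc n then x else y)" for i
      have m': "\<forall>i<Suc (Suc n). p' i \<le> p' (Suc i)"
        using m le xy unfolding p'_def by (auto simp: not_le less_Suc_eq)
      have le': "\<forall>i\<le>Suc (Suc n). p' i \<le> y"
        using le xy unfolding p'_def by (auto simp: not_le le_Suc_eq)
      have "(\<Sum>i<Suc (Suc n). \<bar>g (p' (Suc i)) - g (p' i)\<bar>) =
            (\<Sum>i<n. \<bar>g (p' (Suc i)) - g (p' i)\<bar>) + \<bar>g x - g (p n)\<bar> + \<bar>g y - g x\<bar>"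
        by (simp add: p'_def)
      also have "(\<Sum>i<n. \<bar>g (p' (Suc i)) - g (p' i)\<bar>) = S"
        unfolding S by (intro sum.cong) (auto simp: p'_def)
      finally have eq: "(\<Sum>i<Suc (Suc n). \<bar>g (p' (Suc i)) - g (p' i)\<bar>) = S + \<bar>g x - g (p n)\<bar> + \<bar>g y - g x\<bar>" .
      have "(\<Sum>i<Suc (Suc n). \<bar>g (p' (Suc i)) - g (p' i)\<bar>) \<in> VS y"
        unfolding VS_def using m' le' by (intro CollectI exI[of _ p'] exI[of _ "Suc (Suc n)"]) simp
      then have "(\<Sum>i<Suc (Suc n). \<bar>g (p' (Suc i)) - g (p' i)\<bar>) \<le> P y"
        unfolding P_def using bdd[of y] by (simp add: cSup_upper)
      then show ?thesis using eq by linarith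
    qed
    then have "P x \<le> P y - (g y - g x)" unfolding P_def[of x] using ne by (intro cSup_least) auto
    then show "P x - g x \<le> P y - g y" by linarith
  qed
  have "g = (\<lambda>x. P x - (P x - g x))" by simp
  moreover have "(\<lambda>x. P x - (P x - g x)) \<in> borel_measurable borel"
    using borel_measurable_mono[OF monoP] borel_measurable_mono[OF monoQ] by measurable
  ultimately show ?thesis by simp
qed

lemma rho_bound:
  assumes bv: "bounded_variation \<rho>" and supp: "\<And>x. x \<notin> {-1/2..1/2} \<Longrightarrow> \<rho> x = 0"
  shows "\<bar>\<rho> y\<bar> \<le> Var \<rho>"
proof (cases "y \<in> {-1/2..1/2}")
  case True
  define p where "p i = (if i = 0 then y else 1)" for i :: nat
  have "(\<Sum>i<1. \<bar>\<rho> (p (Suc i)) - \<rho> (p i)\<bar>) \<le> Var \<rho>"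
    by (rule var_sum_le[OF bv]) (use True in \<open>auto simp: p_def\<close>)
  then show ?thesis using supp[of 1] by (simp add: p_def)
next
  case False then show ?thesis using supp Var_nonneg[OF bv] by simp
qed

lemma rs_var:
  assumes bv: "bounded_variation \<rho>" and xi: "\<xi> > 0" and m: "\<forall>i<n. p i \<le> p (Suc i)"
  shows "(\<Sum>i<n. \<bar>rho_scaled \<rho> \<xi> (p (Suc i)) - rho_scaled \<rho> \<xi> (p i)\<bar>) \<le> Var \<rho> / \<xi>"
proof -
  have "(\<Sum>i<n. \<bar>\<rho> ((\<lambda>i. p i / \<xi>) (Suc i)) - \<rho> ((\<lambda>i. p i / \<xi>) i)\<bar>) \<le> Var \<rho>"
    by (rule var_sum_le[OF bv]) (use m xi in \<open>auto simp: divide_right_mono\<close>)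
  moreover have "(\<Sum>i<n. \<bar>rho_scaled \<rho> \<xi> (p (Suc i)) - rho_scaled \<rho> \<xi> (p i)\<bar>) =
     (\<Sum>i<n. \<bar>\<rho> ((\<lambda>i. p i / \<xi>) (Suc i)) - \<rho> ((\<lambda>i. p i / \<xi>) i)\<bar>) / \<xi>"
    unfolding rho_scaled_def sum_divide_distrib using xi
    by (intro sum.cong) (auto simp: diff_divide_distrib[symmetric] abs_div)
  ultimately show ?thesis using xi by (simp add: divide_right_mono)
qed




lemma ind_split:
  fixes a b y :: real assumes a: "a > 0"
  shows "indicator {b..<b + real M * a} y = (\<Sum>i<M. indicator {b + real i * a..<b + real (Suc i) * a} y :: real)"
proof (induction M)
  case 0 then show ?case by simp
next
  case (Suc M)
  have "indicator {b..<b + real (Suc M) * a} y = (indicator {b..<b + real M * a} y + indicator {b + real M * a..<b + real (Suc M) * a} y :: real)"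
  proof -
    define u where "u = b + real M * a"
    have bu: "b \<le> u" using a unfolding u_def by simp
    have e: "b + real (Suc M) * a = u + a" unfolding u_def by (simp add: algebra_simps)
    have "indicator {b..<u + a} y = (indicator {b..<u} y + indicator {u..<u + a} y :: real)"
      using bu a by (auto simp: indicator_def)
    then show ?thesis unfolding e by (simp add: u_def)
  qed
  then show ?case using Suc by simp
qed

lemma l1_shift_pos:
  fixes r :: "real \<Rightarrow> real"
  assumes rb[measurable]: "r \<in> borel_measurable borel" and B: "\<And>y. \<bar>y\<bar> > B \<Longrightarrow> r y = 0"
    and V: "\<And>p n. \<forall>i<n. p i \<le> p (Suc i) \<Longrightarrow> (\<Sum>i<n. \<bar>r (p (Suc i)) - r (p i)\<bar>) \<le> V"
    and a: "a > 0"
  shows "(\<integral>\<^sup>+y. ennreal \<bar>r (y + a) - r y\<bar> \<partial>lebesgue) \<le> ennreal (a * V)"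
proof -
  have V0: "0 \<le> V" using V[of 0 id] by simp
  obtain N :: nat where N: "(\<bar>B\<bar> + a) / a \<le> real N" using real_arch_simple by blast
  then have Na: "\<bar>B\<bar> + a \<le> real N * a" using a by (simp add: field_simps)
  define b where "b = - real N * a"
  define M where "M = 2 * N"
  have bM: "b + real M * a = real N * a" unfolding b_def M_def by (simp add: algebra_simps)
  have rleb: "r \<in> borel_measurable lebesgue" by (rule borel_leb[OF rb])
  have [measurable]: "(\<lambda>y. r (y + c)) \<in> borel_measurable lebesgue" for c
    by (rule borel_leb) measurable
  have "(\<integral>\<^sup>+y. ennreal \<bar>r (y + a) - r y\<bar> \<partial>lebesgue) =
        (\<integral>\<^sup>+y. (\<Sum>i<M. ennreal (indicator {b + real i * a..<b + real (Suc i) * a} y * \<bar>r (y + a) - r y\<bar>)) \<partial>lebesgue)"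
  proof (intro nn_integral_cong)
    fix y :: real
    have "\<bar>r (y + a) - r y\<bar> = indicator {b..<b + real M * a} y * \<bar>r (y + a) - r y\<bar>"
    proof (cases "y \<in> {b..<b + real M * a}")
      case False
      then have "y < b \<or> y \<ge> real N * a" using bM by auto
      then have "\<bar>y\<bar> > B \<and> \<bar>y + a\<bar> > B" using Na a unfolding b_def by auto
      then show ?thesis using B by simp
    qed simp
    also have "\<dots> = (\<Sum>i<M. indicator {b + real i * a..<b + real (Suc i) * a} y * \<bar>r (y + a) - r y\<bar>)"
      by (subst ind_split[OF a]) (simp add: sum_distrib_right)
    finally show "ennreal \<bar>r (y + a) - r y\<bar> = (\<Sum>i<M. ennreal (indicator {b + real i * a..<b + real (Suc i) * a} y * \<bar>r (y + a) - r y\<bar>))"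
      by (simp add: sum_ennreal)
  qed
  also have "\<dots> = (\<Sum>i<M. \<integral>\<^sup>+y. ennreal (indicator {b + real i * a..<b + real (Suc i) * a} y * \<bar>r (y + a) - r y\<bar>) \<partial>lebesgue)"
    by (rule nn_integral_sum) measurable
  also have "\<dots> = (\<Sum>i<M. \<integral>\<^sup>+z. ennreal (indicator {0..<a} z * \<bar>r (z + (b + real (Suc i) * a)) - r (z + (b + real i * a))\<bar>) \<partial>lebesgue)"
  proof (intro sum.cong refl)
    fix i assume "i \<in> {..<M}"
    have "(\<integral>\<^sup>+y. ennreal (indicator {b + real i * a..<b + real (Suc i) * a} y * \<bar>r (y + a) - r y\<bar>) \<partial>lebesgue)
      = ennreal \<bar>1\<bar> * (\<integral>\<^sup>+z. ennreal (indicator {b + real i * a..<b + real (Suc i) * a} ((b + real i * a) + 1 * z) * \<bar>r (((b + real i * a) + 1 * z) + a) - r ((b + real i * a) + 1 * z)\<bar>) \<partial>lebesgue)"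
      by (rule nn_integral_real_affine_lebesgue) measurable
    also have "\<dots> = (\<integral>\<^sup>+z. ennreal (indicator {0..<a} z * \<bar>r (z + (b + real (Suc i) * a)) - r (z + (b + real i * a))\<bar>) \<partial>lebesgue)"
      by (simp only: abs_one ennreal_1 mult_1, intro nn_integral_cong) (auto simp: indicator_def algebra_simps)
    finally show "(\<integral>\<^sup>+y. ennreal (indicator {b + real i * a..<b + real (Suc i) * a} y * \<bar>r (y + a) - r y\<bar>) \<partial>lebesgue)
      = (\<integral>\<^sup>+z. ennreal (indicator {0..<a} z * \<bar>r (z + (b + real (Suc i) * a)) - r (z + (b + real i * a))\<bar>) \<partial>lebesgue)" .
  qed
  also have "\<dots> = (\<integral>\<^sup>+z. (\<Sum>i<M. ennreal (indicator {0..<a} z * \<bar>r (z + (b + real (Suc i) * a)) - r (z + (b + real i * a))\<bar>)) \<partial>lebesgue)"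
    by (rule nn_integral_sum[symmetric]) measurable
  also have "\<dots> \<le> (\<integral>\<^sup>+z. ennreal V * indicator {0..<a} z \<partial>lebesgue)"
  proof (intro nn_integral_mono)
    fix z :: real
    have Vz: "(\<Sum>i<M. \<bar>r ((\<lambda>i. z + (b + real i * a)) (Suc i)) - r ((\<lambda>i. z + (b + real i * a)) i)\<bar>) \<le> V"
      by (rule V) (use a in simp)
    have "ennreal (\<Sum>i<M. indicator {0..<a} z * \<bar>r (z + (b + real (Suc i) * a)) - r (z + (b + real i * a))\<bar>) \<le> ennreal V * indicator {0..<a} z"
    proof (cases "z \<in> {0..<a}")
      case True then show ?thesis using Vz by (simp add: ennreal_leI)
    qed simp
    then show "(\<Sum>i<M. ennreal (indicator {0..<a} z * \<bar>r (z + (b + real (Suc i) * a)) - r (z + (b + real i * a))\<bar>)) \<le> ennreal V * indicator {0..<a} z"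
      by (subst sum_ennreal) auto
  qed
  also have "\<dots> = ennreal V * emeasure lebesgue {0..<a}"
    by (rule nn_integral_cmult_indicator) simp
  also have "\<dots> = ennreal (a * V)"
    using a V0 by (simp add: ennreal_mult' mult.commute)
  finally show ?thesis .
qed

lemma l1_shift:
  fixes r :: "real \<Rightarrow> real"
  assumes rb[measurable]: "r \<in> borel_measurable borel" and B: "\<And>y. \<bar>y\<bar> > B \<Longrightarrow> r y = 0"
    and V: "\<And>p n. \<forall>i<n. p i \<le> p (Suc i) \<Longrightarrow> (\<Sum>i<n. \<bar>r (p (Suc i)) - r (p i)\<bar>) \<le> V"
  shows "(\<integral>\<^sup>+x. ennreal \<bar>r (x - t) - r (x - s)\<bar> \<partial>lebesgue) \<le> ennreal (\<bar>t - s\<bar> * V)"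
proof -
  have [measurable]: "(\<lambda>x. \<bar>r (x - t) - r (x - s)\<bar>) \<in> borel_measurable lebesgue"
    by (rule borel_leb) measurable
  consider "t = s" | "s < t" | "t < s" by linarith
  then show ?thesis
  proof cases
    case 1 then show ?thesis by simp
  next
    case 2
    have "(\<integral>\<^sup>+x. ennreal \<bar>r (x - t) - r (x - s)\<bar> \<partial>lebesgue) = ennreal \<bar>1\<bar> * (\<integral>\<^sup>+z. ennreal \<bar>r ((t + 1 * z) - t) - r ((t + 1 * z) - s)\<bar> \<partial>lebesgue)"
      by (rule nn_integral_real_affine_lebesgue) measurable
    also have "\<dots> = (\<integral>\<^sup>+z. ennreal \<bar>r (z + (t - s)) - r z\<bar> \<partial>lebesgue)"
      by (simp only: abs_one ennreal_1 mult_1, intro nn_integral_cong) (auto simp: algebra_simps abs_minus_commute)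
    also have "\<dots> \<le> ennreal ((t - s) * V)"
      by (rule l1_shift_pos[OF rb B V]) (use 2 in auto)
    finally show ?thesis using 2 by simp
  next
    case 3
    have "(\<integral>\<^sup>+x. ennreal \<bar>r (x - t) - r (x - s)\<bar> \<partial>lebesgue) = ennreal \<bar>1\<bar> * (\<integral>\<^sup>+z. ennreal \<bar>r ((s + 1 * z) - t) - r ((s + 1 * z) - s)\<bar> \<partial>lebesgue)"
      by (rule nn_integral_real_affine_lebesgue) measurable
    also have "\<dots> = (\<integral>\<^sup>+z. ennreal \<bar>r (z + (s - t)) - r z\<bar> \<partial>lebesgue)"
      by (simp only: abs_one ennreal_1 mult_1, intro nn_integral_cong) (auto simp: algebra_simps)
    also have "\<dots> \<le> ennreal ((s - t) * V)"
      by (rule l1_shift_pos[OF rb B V]) (use 3 in auto)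
    finally show ?thesis using 3 by simp
  qed
qed




lemma pointwise_j:
  fixes R \<phi> :: "real \<Rightarrow> real"
  assumes Rm[measurable]: "R \<in> borel_measurable lebesgue" and Rb: "\<And>t. \<bar>R t\<bar> \<le> C"
    and \<phi>: "integrable lebesgue \<phi>" and cd: "c < d"
    and a: "a * (d - c) = (\<integral>t. \<phi> t \<partial>lebesgue)"
  shows "ennreal \<bar>\<integral>t. R t * (\<phi> t - a * indicator {c<..<d} t) \<partial>lebesgue\<bar>
     \<le> (\<integral>\<^sup>+t. \<integral>\<^sup>+s. ennreal (\<bar>\<phi> t\<bar> * indicator {c<..<d} s * \<bar>R t - R s\<bar> / (d - c)) \<partial>lebesgue \<partial>lebesgue)"
proof -
  define L where "L = d - c"
  have L: "L > 0" using cd unfolding L_def by simp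
  let ?\<iota> = "indicator {c<..<d} :: real \<Rightarrow> real"
  have [measurable]: "\<phi> \<in> borel_measurable lebesgue" using \<phi> by (rule borel_measurable_integrable)
  have \<iota>int: "integrable lebesgue ?\<iota>"
    using cd by (intro integrable_real_indicator) auto
  have \<iota>L: "(\<integral>s. ?\<iota> s \<partial>lebesgue) = L"
    using cd unfolding L_def by (simp add: measure_def)
  have C0: "0 \<le> C" using Rb[of 0] by simp
  have R\<phi>: "integrable lebesgue (\<lambda>t. R t * \<phi> t)"
    by (rule Bochner_Integration.integrable_bound[OF integrable_mult_right[OF \<phi>, of C]])
       (use Rb C0 in \<open>auto simp: abs_mult intro!: mult_right_mono\<close>)
  have \<iota>R: "integrable lebesgue (\<lambda>t. ?\<iota> t * R t)"
    by (rule Bochner_Integration.integrable_bound[OF integrable_mult_right[OF \<iota>int, of C]])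
       (use Rb C0 in \<open>auto simp: abs_mult indicator_def\<close>)
  define m where "m = (\<integral>s. ?\<iota> s * R s \<partial>lebesgue) / L"
  have \<phi>Rm: "integrable lebesgue (\<lambda>t. \<phi> t * (R t - m))"
    using R\<phi> \<phi> by (simp add: algebra_simps)
  have "(\<integral>t. R t * (\<phi> t - a * ?\<iota> t) \<partial>lebesgue) = (\<integral>t. R t * \<phi> t \<partial>lebesgue) - a * (\<integral>t. ?\<iota> t * R t \<partial>lebesgue)"
  proof -
    have "(\<integral>t. R t * (\<phi> t - a * ?\<iota> t) \<partial>lebesgue) = (\<integral>t. R t * \<phi> t - a * (?\<iota> t * R t) \<partial>lebesgue)"
      by (simp add: algebra_simps)
    also have "\<dots> = (\<integral>t. R t * \<phi> t \<partial>lebesgue) - (\<integral>t. a * (?\<iota> t * R t) \<partial>lebesgue)"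
      using R\<phi> \<iota>R by (subst Bochner_Integration.integral_diff) auto
    finally show ?thesis by simp
  qed
  also have "\<dots> = (\<integral>t. \<phi> t * (R t - m) \<partial>lebesgue)"
  proof -
    have "(\<integral>t. \<phi> t * (R t - m) \<partial>lebesgue) = (\<integral>t. R t * \<phi> t - m * \<phi> t \<partial>lebesgue)"
      by (simp add: algebra_simps)
    also have "\<dots> = (\<integral>t. R t * \<phi> t \<partial>lebesgue) - m * (\<integral>t. \<phi> t \<partial>lebesgue)"
      using R\<phi> \<phi> by (subst Bochner_Integration.integral_diff) auto
    also have "m * (\<integral>t. \<phi> t \<partial>lebesgue) = a * (\<integral>t. ?\<iota> t * R t \<partial>lebesgue)"
      unfolding m_def a[symmetric] L_def[symmetric] using L by simp
    finally show ?thesis by simp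
  qed
  finally have eq: "(\<integral>t. R t * (\<phi> t - a * ?\<iota> t) \<partial>lebesgue) = (\<integral>t. \<phi> t * (R t - m) \<partial>lebesgue)" .
  have "ennreal \<bar>\<integral>t. \<phi> t * (R t - m) \<partial>lebesgue\<bar> \<le> (\<integral>\<^sup>+t. ennreal \<bar>\<phi> t * (R t - m)\<bar> \<partial>lebesgue)"
    using integral_norm_bound_ennreal[OF \<phi>Rm] by simp
  also have "\<dots> \<le> (\<integral>\<^sup>+t. \<integral>\<^sup>+s. ennreal (\<bar>\<phi> t\<bar> * ?\<iota> s * \<bar>R t - R s\<bar> / (d - c)) \<partial>lebesgue \<partial>lebesgue)"
  proof (intro nn_integral_mono)
    fix t
    have int2: "integrable lebesgue (\<lambda>s. ?\<iota> s * (R t - R s))"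
      using \<iota>int \<iota>R by (simp add: algebra_simps)
    have "(\<integral>s. ?\<iota> s * (R t - R s) \<partial>lebesgue) = R t * L - (\<integral>s. ?\<iota> s * R s \<partial>lebesgue)"
    proof -
      have "(\<integral>s. ?\<iota> s * (R t - R s) \<partial>lebesgue) = (\<integral>s. R t * ?\<iota> s - ?\<iota> s * R s \<partial>lebesgue)"
        by (simp add: algebra_simps)
      also have "\<dots> = (\<integral>s. R t * ?\<iota> s \<partial>lebesgue) - (\<integral>s. ?\<iota> s * R s \<partial>lebesgue)"
        using \<iota>int \<iota>R by (subst Bochner_Integration.integral_diff) auto
      finally show ?thesis using \<iota>L by simp
    qed
    then have Rm_eq: "R t - m = (\<integral>s. ?\<iota> s * (R t - R s) \<partial>lebesgue) / L"
      unfolding m_def using L by (simp add: field_simps)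
    have "ennreal \<bar>\<phi> t * (R t - m)\<bar> = ennreal (\<bar>\<phi> t\<bar> / L) * ennreal \<bar>\<integral>s. ?\<iota> s * (R t - R s) \<partial>lebesgue\<bar>"
      unfolding Rm_eq using L by (simp add: abs_mult ennreal_mult'[symmetric] abs_div)
    also have "\<dots> \<le> ennreal (\<bar>\<phi> t\<bar> / L) * (\<integral>\<^sup>+s. ennreal \<bar>?\<iota> s * (R t - R s)\<bar> \<partial>lebesgue)"
      using integral_norm_bound_ennreal[OF int2] by (intro mult_left_mono) auto
    also have "\<dots> = (\<integral>\<^sup>+s. ennreal (\<bar>\<phi> t\<bar> / L) * ennreal \<bar>?\<iota> s * (R t - R s)\<bar> \<partial>lebesgue)"
      by (rule nn_integral_cmult[symmetric]) measurable
    also have "\<dots> = (\<integral>\<^sup>+s. ennreal (\<bar>\<phi> t\<bar> * ?\<iota> s * \<bar>R t - R s\<bar> / (d - c)) \<partial>lebesgue)"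
      using L by (intro nn_integral_cong) (auto simp: ennreal_mult'[symmetric] abs_mult L_def indicator_def)
    finally show "ennreal \<bar>\<phi> t * (R t - m)\<bar> \<le> (\<integral>\<^sup>+s. ennreal (\<bar>\<phi> t\<bar> * ?\<iota> s * \<bar>R t - R s\<bar> / (d - c)) \<partial>lebesgue)" .
  qed
  finally show ?thesis unfolding eq .
qed




lemma dist_int:
  fixes c d t :: real assumes ct: "c \<le> t" and td: "t \<le> d"
  shows "(\<integral>\<^sup>+s. ennreal (indicator {c<..<d} s * \<bar>t - s\<bar>) \<partial>lebesgue) \<le> ennreal ((d - c)^2 / 2)"
proof -
  have h1: "((\<lambda>s. t - s) has_integral ((t - c)^2 / 2)) {c..t}"
  proof -
    define F1 where "F1 = (\<lambda>s::real. - ((t - s)^2) / 2)"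
    have "((\<lambda>s. t - s) has_integral (F1 t - F1 c)) {c..t}"
      unfolding F1_def by (rule fundamental_theorem_of_calculus[OF ct])
         (auto intro!: derivative_eq_intros simp: has_real_derivative_iff_has_vector_derivative[symmetric] power2_eq_square field_simps)
    moreover have "F1 t - F1 c = (t - c)^2 / 2" unfolding F1_def by (simp add: power2_eq_square field_simps)
    ultimately show ?thesis by simp
  qed
  have h2: "((\<lambda>s. s - t) has_integral ((d - t)^2 / 2)) {t..d}"
  proof -
    define F2 where "F2 = (\<lambda>s::real. ((s - t)^2) / 2)"
    have "((\<lambda>s. s - t) has_integral (F2 d - F2 t)) {t..d}"
      unfolding F2_def by (rule fundamental_theorem_of_calculus[OF td])
         (auto intro!: derivative_eq_intros simp: has_real_derivative_iff_has_vector_derivative[symmetric] power2_eq_square field_simps)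
    moreover have "F2 d - F2 t = (d - t)^2 / 2" unfolding F2_def by (simp add: power2_eq_square field_simps)
    ultimately show ?thesis by simp
  qed
  have h1': "((\<lambda>s. \<bar>t - s\<bar>) has_integral ((t - c)^2 / 2)) {c..t}"
    by (rule has_integral_eq[OF _ h1]) auto
  have h2': "((\<lambda>s. \<bar>t - s\<bar>) has_integral ((d - t)^2 / 2)) {t..d}"
    by (rule has_integral_eq[OF _ h2]) auto
  have h: "((\<lambda>s. \<bar>t - s\<bar>) has_integral ((t - c)^2 / 2 + (d - t)^2 / 2)) {c..d}"
    by (rule has_integral_combine[OF ct td h1' h2'])
  have hU: "((\<lambda>s. indicator {c..d} s * \<bar>t - s\<bar>) has_integral ((t - c)^2 / 2 + (d - t)^2 / 2)) UNIV"
  proof -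
    have e: "(\<lambda>s. indicator {c..d} s * \<bar>t - s\<bar>) = (\<lambda>s. if s \<in> {c..d} then \<bar>t - s\<bar> else 0)"
      by (auto simp: indicator_def fun_eq_iff)
    show ?thesis unfolding e has_integral_restrict_UNIV by (rule h)
  qed
  have nn: "(\<integral>\<^sup>+s. ennreal (indicator {c..d} s * \<bar>t - s\<bar>) \<partial>lebesgue) = ennreal ((t - c)^2 / 2 + (d - t)^2 / 2)"
  proof -
    have "(\<lambda>s. indicator {c..d} s * \<bar>t - s\<bar>) \<in> borel_measurable lebesgue \<and> (\<integral>\<^sup>+s. ennreal (indicator {c..d} s * \<bar>t - s\<bar>) \<partial>lebesgue) = ennreal ((t - c)^2 / 2 + (d - t)^2 / 2) \<and> 0 \<le> ((t - c)^2 / 2 + (d - t)^2 / 2)"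
      by (rule has_integral_iff_nn_integral_lebesgue[THEN iffD1, OF _ hU]) simp
    then show ?thesis by blast
  qed
  have "(\<integral>\<^sup>+s. ennreal (indicator {c<..<d} s * \<bar>t - s\<bar>) \<partial>lebesgue) \<le> (\<integral>\<^sup>+s. ennreal (indicator {c..d} s * \<bar>t - s\<bar>) \<partial>lebesgue)"
    by (intro nn_integral_mono ennreal_leI) (auto simp: indicator_def)
  also have "\<dots> \<le> ennreal ((d - c)^2 / 2)"
  proof -
    have p: "0 \<le> (t - c) * (d - t)" using ct td by simp
    have "(d - c)^2 = (t - c)^2 + (d - t)^2 + 2 * ((t - c) * (d - t))" by (simp add: power2_eq_square algebra_simps)
    then have "(t - c)^2 / 2 + (d - t)^2 / 2 \<le> (d - c)^2 / 2" using p by linarith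
    then show ?thesis unfolding nn by (rule ennreal_leI)
  qed
  finally show ?thesis .
qed

lemma tonelli3:
  fixes F :: "(real \<times> real) \<times> real \<Rightarrow> ennreal"
  assumes F[measurable]: "F \<in> borel_measurable ((lebesgue \<Otimes>\<^sub>M lebesgue) \<Otimes>\<^sub>M lebesgue)"
  shows "(\<integral>\<^sup>+x. \<integral>\<^sup>+t. \<integral>\<^sup>+s. F ((x, t), s) \<partial>lebesgue \<partial>lebesgue \<partial>lebesgue)
       = (\<integral>\<^sup>+t. \<integral>\<^sup>+s. \<integral>\<^sup>+x. F ((x, t), s) \<partial>lebesgue \<partial>lebesgue \<partial>lebesgue)"
proof -
  have G: "(\<lambda>p. \<integral>\<^sup>+s. F (p, s) \<partial>lebesgue) \<in> borel_measurable (lebesgue \<Otimes>\<^sub>M lebesgue)"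
    by (rule leb.borel_measurable_nn_integral_fst[OF F])
  have "(\<integral>\<^sup>+x. \<integral>\<^sup>+t. \<integral>\<^sup>+s. F ((x, t), s) \<partial>lebesgue \<partial>lebesgue \<partial>lebesgue)
      = (\<integral>\<^sup>+t. \<integral>\<^sup>+x. \<integral>\<^sup>+s. F ((x, t), s) \<partial>lebesgue \<partial>lebesgue \<partial>lebesgue)"
    using leb_pair.Fubini'[of "\<lambda>x t. \<integral>\<^sup>+s. F ((x, t), s) \<partial>lebesgue"] G by simp
  also have "\<dots> = (\<integral>\<^sup>+t. \<integral>\<^sup>+s. \<integral>\<^sup>+x. F ((x, t), s) \<partial>lebesgue \<partial>lebesgue \<partial>lebesgue)"
  proof (rule nn_integral_cong)
    fix t :: real
    have m: "(\<lambda>p. F ((fst p, t), snd p)) \<in> borel_measurable (lebesgue \<Otimes>\<^sub>M lebesgue)"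
      by measurable
    show "(\<integral>\<^sup>+x. \<integral>\<^sup>+s. F ((x, t), s) \<partial>lebesgue \<partial>lebesgue) = (\<integral>\<^sup>+s. \<integral>\<^sup>+x. F ((x, t), s) \<partial>lebesgue \<partial>lebesgue)"
      using leb_pair.Fubini'[of "\<lambda>x s. F ((x, t), s)"] m by (simp add: case_prod_beta')
  qed
  finally show ?thesis .
qed

lemma pi_fold_eq:
  fixes x :: real
  shows "\<exists>i::int. pi_fold x = \<bar>x - 2 * of_int i\<bar>"
proof -
  define i0 where "i0 = \<lfloor>(x + 1) / 2\<rfloor>"
  have lo: "2 * of_int i0 \<le> x + 1" using of_int_floor_le[of "(x+1)/2"] unfolding i0_def by (simp add: field_simps)
  have hi: "x + 1 < 2 * of_int i0 + 2" using real_of_int_floor_add_one_gt[of "(x+1)/2"] unfolding i0_def by (simp add: field_simps)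
  have min: "\<bar>x - 2 * of_int i0\<bar> \<le> \<bar>x - 2 * of_int i\<bar>" for i :: int
  proof (cases "i = i0")
    case False
    then have "i \<ge> i0 + 1 \<or> i \<le> i0 - 1" by linarith
    then have "of_int i \<ge> of_int i0 + (1::real) \<or> of_int i \<le> of_int i0 - (1::real)"
      by (metis of_int_add of_int_diff of_int_le_iff of_int_1)
    then show ?thesis using lo hi by linarith
  qed simp
  have "pi_fold x = \<bar>x - 2 * of_int i0\<bar>"
    unfolding pi_fold_def by (rule cInf_eq_minimum) (use min in auto)
  then show ?thesis by blast
qed




lemma leb_affine: "c \<noteq> 0 \<Longrightarrow> (\<lambda>x::real. t + c * x) \<in> lebesgue \<rightarrow>\<^sub>M lebesgue"
  using lebesgue_affine_measurable[where c="\<lambda>x::real. c" and t=t] by simp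

lemma push_bound:
  fixes h :: "real \<Rightarrow> real" and N :: nat
  assumes hB: "\<And>x. \<bar>x\<bar> > real N \<Longrightarrow> h x = 0" and y: "0 \<le> y" "y \<le> 1"
  shows "\<bar>pushforward_pi h y\<bar> \<le> (\<Sum>i\<in>{- int N..int N}. \<bar>h (2 * of_int i + y)\<bar> + \<bar>h (2 * of_int i - y)\<bar>)"
proof -
  define I where "I = {- int N..int N}"
  define S where "S = {x. pi_fold x = y}"
  define E1 where "E1 = (\<lambda>i. 2 * of_int i + y) ` I"
  define E2 where "E2 = (\<lambda>i. 2 * of_int i - y) ` I"
  have fI: "finite I" unfolding I_def by simp
  have fE: "finite (E1 \<union> E2)" unfolding E1_def E2_def using fI by simp
  have out: "h x = 0" if "x \<in> S" "x \<notin> E1 \<union> E2" for x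
  proof -
    obtain i :: int where i: "pi_fold x = \<bar>x - 2 * of_int i\<bar>" using pi_fold_eq by blast
    then have xi: "x = 2 * of_int i + y \<or> x = 2 * of_int i - y" using that(1) unfolding S_def by auto
    have "i \<notin> I" using xi that(2) unfolding E1_def E2_def by auto
    then have "i \<ge> int N + 1 \<or> i \<le> - int N - 1" unfolding I_def by auto
    then have "of_int i \<ge> real N + 1 \<or> of_int i \<le> - real N - (1::real)"
      by (metis (mono_tags) of_int_le_iff of_int_add of_int_diff of_int_minus of_int_of_nat_eq of_int_1)
    then have "\<bar>x\<bar> > real N" using xi y by auto
    then show ?thesis by (rule hB)
  qed
  have "pushforward_pi h y = infsum h S" unfolding pushforward_pi_def S_def using y by simp
  also have "\<dots> = infsum h (S \<inter> (E1 \<union> E2))"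
    by (rule infsum_cong_neutral) (use out in auto)
  also have "\<dots> = sum h (S \<inter> (E1 \<union> E2))" using fE by simp
  finally have eq: "pushforward_pi h y = sum h (S \<inter> (E1 \<union> E2))" .
  have "\<bar>sum h (S \<inter> (E1 \<union> E2))\<bar> \<le> sum (\<lambda>x. \<bar>h x\<bar>) (S \<inter> (E1 \<union> E2))" by (rule sum_abs)
  also have "\<dots> \<le> sum (\<lambda>x. \<bar>h x\<bar>) (E1 \<union> E2)" using fE by (intro sum_mono2) auto
  also have "\<dots> \<le> sum (\<lambda>x. \<bar>h x\<bar>) E1 + sum (\<lambda>x. \<bar>h x\<bar>) E2"
  proof -
    have "sum (\<lambda>x. \<bar>h x\<bar>) (E1 \<union> E2) + sum (\<lambda>x. \<bar>h x\<bar>) (E1 \<inter> E2) = sum (\<lambda>x. \<bar>h x\<bar>) E1 + sum (\<lambda>x. \<bar>h x\<bar>) E2"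
      using fE by (intro sum.union_inter) auto
    moreover have "0 \<le> sum (\<lambda>x. \<bar>h x\<bar>) (E1 \<inter> E2)" by (rule sum_nonneg) simp
    ultimately show ?thesis by linarith
  qed
  also have "\<dots> \<le> (\<Sum>i\<in>I. \<bar>h (2 * of_int i + y)\<bar>) + (\<Sum>i\<in>I. \<bar>h (2 * of_int i - y)\<bar>)"
    unfolding E1_def E2_def using fI
    by (intro add_mono order.trans[OF sum_image_le]) (auto simp: o_def)
  also have "\<dots> = (\<Sum>i\<in>I. \<bar>h (2 * of_int i + y)\<bar> + \<bar>h (2 * of_int i - y)\<bar>)"
    by (simp add: sum.distrib)
  finally show ?thesis unfolding eq I_def .
qed

lemma ind_disj:
  fixes x :: real and I :: "int set" assumes fI: "finite I"
  shows "(\<Sum>i\<in>I. indicator {2 * of_int i <..< 2 * of_int i + 1} x + indicator {2 * of_int i - 1 <..< 2 * of_int i} x) \<le> (1::real)"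
proof -
  define q where "q i = (indicator {2 * of_int i <..< 2 * of_int i + 1} x + indicator {2 * of_int i - 1 <..< 2 * of_int i} x :: real)" for i :: int
  define i0 where "i0 = (\<lfloor>x\<rfloor> + 1) div 2"
  have q0: "q i = 0" if "i \<noteq> i0" for i
  proof (rule ccontr)
    assume "q i \<noteq> 0"
    then have "x \<in> {2 * of_int i <..< 2 * of_int i + 1} \<or> x \<in> {2 * of_int i - 1 <..< 2 * of_int i}"
      unfolding q_def by (auto simp: indicator_def split: if_splits)
    then have "\<lfloor>x\<rfloor> = 2 * i \<or> \<lfloor>x\<rfloor> = 2 * i - 1"
    proof
      assume "x \<in> {2 * of_int i <..< 2 * of_int i + 1}"
      then have "of_int (2 * i) \<le> x" "x < of_int (2 * i) + 1" by auto
      then show ?thesis by (metis floor_unique)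
    next
      assume "x \<in> {2 * of_int i - 1 <..< 2 * of_int i}"
      then have "of_int (2 * i - 1) \<le> x" "x < of_int (2 * i - 1) + 1" by auto
      then show ?thesis by (metis floor_unique)
    qed
    then have "i = i0" unfolding i0_def by auto
    then show False using that by simp
  qed
  have q1: "q i0 \<le> 1" unfolding q_def by (auto simp: indicator_def)
  have "(\<Sum>i\<in>I. q i) = (\<Sum>i\<in>I. if i = i0 then q i else 0)"
    by (intro sum.cong) (use q0 in auto)
  also have "\<dots> = (if i0 \<in> I then q i0 else 0)" using fI by (simp add: sum.delta)
  also have "\<dots> \<le> 1" using q1 by simp
  finally show ?thesis unfolding q_def .
qed




lemma stepA:
  fixes h :: "real \<Rightarrow> real"
  assumes hm[measurable]: "h \<in> borel_measurable lebesgue" and hB: "\<And>x. \<bar>x\<bar> > B \<Longrightarrow> h x = 0"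
    and bound: "(\<integral>\<^sup>+x. ennreal \<bar>h x\<bar> \<partial>lebesgue) \<le> ennreal K" and K0: "0 \<le> K"
  shows "L1norm (pushforward_pi h) \<le> K"
proof (cases "(\<lambda>y. \<bar>pushforward_pi h y\<bar>) integrable_on {0..1}")
  case False
  then show ?thesis unfolding L1norm_def using K0 by (simp add: not_integrable_integral)
next
  case True
  obtain N :: nat where N: "B \<le> real N" using real_arch_simple by blast
  have hN: "\<And>x. \<bar>x\<bar> > real N \<Longrightarrow> h x = 0" using hB N by fastforce
  define I where "I = {- int N..int N}"
  have fI: "finite I" unfolding I_def by simp
  let ?P = "\<lambda>y. \<bar>pushforward_pi h y\<bar>"
  let ?J = "{0::real<..<1}"
  have hi: "(?P has_integral L1norm (pushforward_pi h)) {0..1}"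
    using True unfolding L1norm_def by (simp add: has_integral_integral)
  have hU: "((\<lambda>y. indicator {0..1} y * ?P y) has_integral L1norm (pushforward_pi h)) UNIV"
  proof -
    have e: "(\<lambda>y. indicator {0..1} y * ?P y) = (\<lambda>y. if y \<in> {0..1} then ?P y else 0)"
      by (auto simp: indicator_def fun_eq_iff)
    show ?thesis unfolding e has_integral_restrict_UNIV by (rule hi)
  qed
  have "(\<lambda>y. indicator {0..1} y * ?P y) \<in> borel_measurable lebesgue \<and>
      (\<integral>\<^sup>+y. ennreal (indicator {0..1} y * ?P y) \<partial>lebesgue) = ennreal (L1norm (pushforward_pi h)) \<and> 0 \<le> L1norm (pushforward_pi h)"
    by (rule has_integral_iff_nn_integral_lebesgue[THEN iffD1, OF _ hU]) simp
  then have nn: "(\<integral>\<^sup>+y. ennreal (indicator {0..1} y * ?P y) \<partial>lebesgue) = ennreal (L1norm (pushforward_pi h))"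
    and L0: "0 \<le> L1norm (pushforward_pi h)" by auto
  have m1[measurable]: "(\<lambda>y. h (2 * of_int i + y)) \<in> borel_measurable lebesgue" for i :: int
    using measurable_compose[OF leb_affine[of 1 "2 * of_int i"] hm] by simp
  have m2[measurable]: "(\<lambda>y. h (2 * of_int i - y)) \<in> borel_measurable lebesgue" for i :: int
    using measurable_compose[OF leb_affine[of "-1" "2 * of_int i"] hm] by simp
  have AE01: "AE y in lebesgue. y \<noteq> 0 \<and> y \<noteq> 1"
    using AE_completion[OF AE_lborel_singleton[of 0]] AE_completion[OF AE_lborel_singleton[of 1]] by eventually_elim auto
  have "(\<integral>\<^sup>+y. ennreal (indicator {0..1} y * ?P y) \<partial>lebesgue) \<le>
        (\<integral>\<^sup>+y. (\<Sum>i\<in>I. ennreal (indicator ?J y * \<bar>h (2 * of_int i + y)\<bar>) + ennreal (indicator ?J y * \<bar>h (2 * of_int i - y)\<bar>)) \<partial>lebesgue)"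
  proof (rule nn_integral_mono_AE)
    show "AE y in lebesgue. ennreal (indicator {0..1} y * ?P y) \<le> (\<Sum>i\<in>I. ennreal (indicator ?J y * \<bar>h (2 * of_int i + y)\<bar>) + ennreal (indicator ?J y * \<bar>h (2 * of_int i - y)\<bar>))"
      using AE01
    proof eventually_elim
      case (elim y)
      show ?case
      proof (cases "y \<in> ?J")
        case True
        have "?P y \<le> (\<Sum>i\<in>I. \<bar>h (2 * of_int i + y)\<bar> + \<bar>h (2 * of_int i - y)\<bar>)"
          unfolding I_def by (rule push_bound[OF hN]) (use True in auto)
        then have "ennreal (indicator {0..1} y * ?P y) \<le> ennreal (\<Sum>i\<in>I. indicator ?J y * \<bar>h (2 * of_int i + y)\<bar> + indicator ?J y * \<bar>h (2 * of_int i - y)\<bar>)"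
          using True by (intro ennreal_leI) simp
        also have "\<dots> = (\<Sum>i\<in>I. ennreal (indicator ?J y * \<bar>h (2 * of_int i + y)\<bar>) + ennreal (indicator ?J y * \<bar>h (2 * of_int i - y)\<bar>))"
          by (subst sum_ennreal[symmetric]) (auto intro!: sum.cong ennreal_plus)
        finally show ?thesis .
      next
        case False
        then have "y \<notin> {0..1}" using elim by auto
        then show ?thesis by simp
      qed
    qed
  qed
  also have "\<dots> = (\<Sum>i\<in>I. (\<integral>\<^sup>+y. ennreal (indicator ?J y * \<bar>h (2 * of_int i + y)\<bar>) \<partial>lebesgue) + (\<integral>\<^sup>+y. ennreal (indicator ?J y * \<bar>h (2 * of_int i - y)\<bar>) \<partial>lebesgue))"
    by (subst nn_integral_sum) (auto intro!: sum.cong nn_integral_add)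
  also have "\<dots> = (\<Sum>i\<in>I. (\<integral>\<^sup>+x. ennreal (indicator {2 * of_int i <..< 2 * of_int i + 1} x * \<bar>h x\<bar>) \<partial>lebesgue) + (\<integral>\<^sup>+x. ennreal (indicator {2 * of_int i - 1 <..< 2 * of_int i} x * \<bar>h x\<bar>) \<partial>lebesgue))"
  proof (intro sum.cong refl arg_cong2[where f="(+)"])
    fix i :: int
    have "(\<integral>\<^sup>+x. ennreal (indicator {2 * of_int i <..< 2 * of_int i + 1} x * \<bar>h x\<bar>) \<partial>lebesgue)
      = ennreal \<bar>1\<bar> * (\<integral>\<^sup>+y. ennreal (indicator {2 * of_int i <..< 2 * of_int i + 1} (2 * of_int i + 1 * y) * \<bar>h (2 * of_int i + 1 * y)\<bar>) \<partial>lebesgue)"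
      by (rule nn_integral_real_affine_lebesgue) measurable
    also have "\<dots> = (\<integral>\<^sup>+y. ennreal (indicator ?J y * \<bar>h (2 * of_int i + y)\<bar>) \<partial>lebesgue)"
      by (simp only: abs_one ennreal_1 mult_1, intro nn_integral_cong) (auto simp: indicator_def)
    finally show "(\<integral>\<^sup>+y. ennreal (indicator ?J y * \<bar>h (2 * of_int i + y)\<bar>) \<partial>lebesgue) = (\<integral>\<^sup>+x. ennreal (indicator {2 * of_int i <..< 2 * of_int i + 1} x * \<bar>h x\<bar>) \<partial>lebesgue)" by simp
    have "(\<integral>\<^sup>+x. ennreal (indicator {2 * of_int i - 1 <..< 2 * of_int i} x * \<bar>h x\<bar>) \<partial>lebesgue)
      = ennreal \<bar>-1\<bar> * (\<integral>\<^sup>+y. ennreal (indicator {2 * of_int i - 1 <..< 2 * of_int i} (2 * of_int i + (-1) * y) * \<bar>h (2 * of_int i + (-1) * y)\<bar>) \<partial>lebesgue)"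
      by (rule nn_integral_real_affine_lebesgue) measurable
    also have "\<dots> = (\<integral>\<^sup>+y. ennreal (indicator ?J y * \<bar>h (2 * of_int i - y)\<bar>) \<partial>lebesgue)"
      by (simp only: abs_minus_cancel abs_one ennreal_1 mult_1, intro nn_integral_cong) (auto simp: indicator_def)
    finally show "(\<integral>\<^sup>+y. ennreal (indicator ?J y * \<bar>h (2 * of_int i - y)\<bar>) \<partial>lebesgue) = (\<integral>\<^sup>+x. ennreal (indicator {2 * of_int i - 1 <..< 2 * of_int i} x * \<bar>h x\<bar>) \<partial>lebesgue)" by simp
  qed
  also have "\<dots> = (\<integral>\<^sup>+x. (\<Sum>i\<in>I. ennreal (indicator {2 * of_int i <..< 2 * of_int i + 1} x * \<bar>h x\<bar>) + ennreal (indicator {2 * of_int i - 1 <..< 2 * of_int i} x * \<bar>h x\<bar>)) \<partial>lebesgue)"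
    by (subst nn_integral_sum) (auto intro!: sum.cong nn_integral_add[symmetric])
  also have "\<dots> \<le> (\<integral>\<^sup>+x. ennreal \<bar>h x\<bar> \<partial>lebesgue)"
  proof (rule nn_integral_mono)
    fix x :: real
    have "(\<Sum>i\<in>I. ennreal (indicator {2 * of_int i <..< 2 * of_int i + 1} x * \<bar>h x\<bar>) + ennreal (indicator {2 * of_int i - 1 <..< 2 * of_int i} x * \<bar>h x\<bar>))
        = ennreal ((\<Sum>i\<in>I. indicator {2 * of_int i <..< 2 * of_int i + 1} x + indicator {2 * of_int i - 1 <..< 2 * of_int i} x) * \<bar>h x\<bar>)"
    proof -
      have "\<And>i. ennreal (indicator {2 * of_int i <..< 2 * of_int i + 1} x * \<bar>h x\<bar>) + ennreal (indicator {2 * of_int i - 1 <..< 2 * of_int i} x * \<bar>h x\<bar>)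
         = ennreal ((indicator {2 * of_int i <..< 2 * of_int i + 1} x + indicator {2 * of_int i - 1 <..< 2 * of_int i} x) * \<bar>h x\<bar>)"
        by (subst ennreal_plus[symmetric]) (auto simp: distrib_right)
      then have "(\<Sum>i\<in>I. ennreal (indicator {2 * of_int i <..< 2 * of_int i + 1} x * \<bar>h x\<bar>) + ennreal (indicator {2 * of_int i - 1 <..< 2 * of_int i} x * \<bar>h x\<bar>))
         = (\<Sum>i\<in>I. ennreal ((indicator {2 * of_int i <..< 2 * of_int i + 1} x + indicator {2 * of_int i - 1 <..< 2 * of_int i} x) * \<bar>h x\<bar>))"
        by simp
      also have "\<dots> = ennreal (\<Sum>i\<in>I. (indicator {2 * of_int i <..< 2 * of_int i + 1} x + indicator {2 * of_int i - 1 <..< 2 * of_int i} x) * \<bar>h x\<bar>)"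
        by (rule sum_ennreal) simp
      finally show ?thesis by (simp only: sum_distrib_right)
    qed
    also have "\<dots> \<le> ennreal (1 * \<bar>h x\<bar>)"
      by (intro ennreal_leI mult_right_mono ind_disj[OF fI]) simp
    finally show "(\<Sum>i\<in>I. ennreal (indicator {2 * of_int i <..< 2 * of_int i + 1} x * \<bar>h x\<bar>) + ennreal (indicator {2 * of_int i - 1 <..< 2 * of_int i} x * \<bar>h x\<bar>)) \<le> ennreal \<bar>h x\<bar>" by simp
  qed
  also have "\<dots> \<le> ennreal K" by (rule bound)
  finally have "ennreal (L1norm (pushforward_pi h)) \<le> ennreal K" unfolding nn .
  then show ?thesis using K0 by (simp add: ennreal_le_iff)
qed




lemma meas_prod2:
  fixes r G :: "real \<Rightarrow> real"
  assumes r: "r \<in> borel_measurable borel" and G: "G \<in> borel_measurable lebesgue"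
  shows "(\<lambda>p::real\<times>real. r (fst p - snd p) * G (snd p)) \<in> borel_measurable (lebesgue \<Otimes>\<^sub>M lebesgue)"
proof -
  have [measurable]: "(\<lambda>p::real\<times>real. fst p) \<in> borel_measurable (lebesgue \<Otimes>\<^sub>M lebesgue)"
    by (rule leb_to_borel) measurable
  have [measurable]: "(\<lambda>p::real\<times>real. snd p) \<in> borel_measurable (lebesgue \<Otimes>\<^sub>M lebesgue)"
    by (rule leb_to_borel) measurable
  have a[measurable]: "(\<lambda>p::real\<times>real. r (fst p - snd p)) \<in> borel_measurable (lebesgue \<Otimes>\<^sub>M lebesgue)"
    by (rule measurable_compose[OF _ r]) measurable
  have c[measurable]: "(\<lambda>p::real\<times>real. G (snd p)) \<in> borel_measurable (lebesgue \<Otimes>\<^sub>M lebesgue)"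
    by (rule measurable_compose[OF _ G]) measurable
  show ?thesis by measurable
qed

lemma meas_prod3:
  fixes r \<phi> \<psi> :: "real \<Rightarrow> real"
  assumes r: "r \<in> borel_measurable borel" and \<phi>: "\<phi> \<in> borel_measurable lebesgue" and \<psi>: "\<psi> \<in> borel_measurable lebesgue"
  shows "(\<lambda>p::(real\<times>real)\<times>real. ennreal (\<bar>\<phi> (snd (fst p))\<bar> * \<psi> (snd p) * \<bar>r (fst (fst p) - snd (fst p)) - r (fst (fst p) - snd p)\<bar> / D))
     \<in> borel_measurable ((lebesgue \<Otimes>\<^sub>M lebesgue) \<Otimes>\<^sub>M lebesgue)"
proof -
  have [measurable]: "(\<lambda>p::(real\<times>real)\<times>real. fst (fst p)) \<in> borel_measurable ((lebesgue \<Otimes>\<^sub>M lebesgue) \<Otimes>\<^sub>M lebesgue)"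
    by (rule leb_to_borel) measurable
  have [measurable]: "(\<lambda>p::(real\<times>real)\<times>real. snd (fst p)) \<in> borel_measurable ((lebesgue \<Otimes>\<^sub>M lebesgue) \<Otimes>\<^sub>M lebesgue)"
    by (rule leb_to_borel) measurable
  have [measurable]: "(\<lambda>p::(real\<times>real)\<times>real. snd p) \<in> borel_measurable ((lebesgue \<Otimes>\<^sub>M lebesgue) \<Otimes>\<^sub>M lebesgue)"
    by (rule leb_to_borel) measurable
  have a[measurable]: "(\<lambda>p::(real\<times>real)\<times>real. r (fst (fst p) - snd (fst p))) \<in> borel_measurable ((lebesgue \<Otimes>\<^sub>M lebesgue) \<Otimes>\<^sub>M lebesgue)"
    by (rule measurable_compose[OF _ r]) measurable
  have b[measurable]: "(\<lambda>p::(real\<times>real)\<times>real. r (fst (fst p) - snd p)) \<in> borel_measurable ((lebesgue \<Otimes>\<^sub>M lebesgue) \<Otimes>\<^sub>M lebesgue)"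
    by (rule measurable_compose[OF _ r]) measurable
  have c[measurable]: "(\<lambda>p::(real\<times>real)\<times>real. \<phi> (snd (fst p))) \<in> borel_measurable ((lebesgue \<Otimes>\<^sub>M lebesgue) \<Otimes>\<^sub>M lebesgue)"
    by (rule measurable_compose[OF _ \<phi>]) measurable
  have d[measurable]: "(\<lambda>p::(real\<times>real)\<times>real. \<psi> (snd p)) \<in> borel_measurable ((lebesgue \<Otimes>\<^sub>M lebesgue) \<Otimes>\<^sub>M lebesgue)"
    by (rule measurable_compose[OF _ \<psi>]) measurable
  show ?thesis by measurable
qed

lemma ind_grid_unique:
  fixes k :: nat and t :: real
  assumes k: "k \<ge> 1" and t: "t \<in> {real j / real k <..< real (Suc j) / real k}"
  shows "j = nat \<lfloor>t * real k\<rfloor>"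
proof -
  have kp: "real k > 0" using k by simp
  have "real j < t * real k" "t * real k < real j + 1" using t kp by (auto simp: field_simps)
  then have "\<lfloor>t * real k\<rfloor> = int j" by (intro floor_unique) auto
  then show ?thesis by simp
qed

lemma ind_sum_le:
  fixes k :: nat and t :: real assumes k: "k \<ge> 1"
  shows "(\<Sum>j<k. indicator {real j / real k <..< real (Suc j) / real k} t) \<le> (1::real)"
proof -
  define j0 where "j0 = nat \<lfloor>t * real k\<rfloor>"
  have "(\<Sum>j<k. indicator {real j / real k <..< real (Suc j) / real k} t :: real) =
        (\<Sum>j<k. if j = j0 then indicator {real j / real k <..< real (Suc j) / real k} t else 0)"
    by (intro sum.cong refl) (use ind_grid_unique[OF k] in \<open>auto simp: indicator_def j0_def\<close>)
  also have "\<dots> \<le> 1" by (simp add: sum.delta indicator_def)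
  finally show ?thesis .
qed

lemma interval_integral_eq:
  fixes f :: "real \<Rightarrow> real"
  assumes fabs: "f absolutely_integrable_on {0..1}" and cd: "c \<le> d" and sub: "{c..d} \<subseteq> {0..1}"
  shows "integral {c..d} f = (\<integral>t. indicator {c<..<d} t * (indicator {0..1} t * f t) \<partial>lebesgue)"
proof -
  have si: "set_integrable lebesgue {c..d} f"
    using set_integrable_subset[OF fabs] sub by auto
  have "integral {c..d} f = (LINT t:{c..d}|lebesgue. f t)"
    using set_lebesgue_integral_eq_integral(2)[OF si] by simp
  also have "\<dots> = (\<integral>t. indicator {c..d} t * f t \<partial>lebesgue)" unfolding set_lebesgue_integral_def by simp
  also have "\<dots> = (\<integral>t. indicator {c<..<d} t * (indicator {0..1} t * f t) \<partial>lebesgue)"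
  proof (rule integral_cong_AE)
    have fm: "(\<lambda>t. indicator {0..1} t * f t) \<in> borel_measurable lebesgue"
      using fabs unfolding set_integrable_def
      by (auto dest: borel_measurable_integrable)
    have fm2: "(\<lambda>t. indicator {c..d} t * f t) \<in> borel_measurable lebesgue"
      using si unfolding set_integrable_def by (auto dest: borel_measurable_integrable)
    show "(\<lambda>t. indicator {c..d} t * f t) \<in> borel_measurable lebesgue" by (rule fm2)
    show "(\<lambda>t. indicator {c<..<d} t * (indicator {0..1} t * f t)) \<in> borel_measurable lebesgue"
      using fm by measurable
    show "AE t in lebesgue. indicator {c..d} t * f t = indicator {c<..<d} t * (indicator {0..1} t * f t)"
      using AE_completion[OF AE_lborel_singleton[of c]] AE_completion[OF AE_lborel_singleton[of d]]
    proof eventually_elim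
      case (elim t) then show ?case using sub by (auto simp: indicator_def subset_iff)
    qed
  qed
  finally show ?thesis .
qed

lemma L1norm_nn:
  fixes f :: "real \<Rightarrow> real"
  assumes fabs: "f absolutely_integrable_on {0..1}"
  shows "(\<integral>\<^sup>+t. ennreal \<bar>indicator {0..1} t * f t\<bar> \<partial>lebesgue) = ennreal (L1norm f)"
proof -
  have "(\<lambda>x. norm (f x)) integrable_on {0..1}" using fabs absolutely_integrable_on_def by blast
  then have hi: "((\<lambda>x. \<bar>f x\<bar>) has_integral L1norm f) {0..1}" unfolding L1norm_def by (simp add: has_integral_integral)
  have hU: "((\<lambda>t. \<bar>indicator {0..1} t * f t\<bar>) has_integral L1norm f) UNIV"
  proof -
    have e: "(\<lambda>t. \<bar>indicator {0..1} t * f t\<bar>) = (\<lambda>t. if t \<in> {0..1} then \<bar>f t\<bar> else 0)"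
      by (auto simp: indicator_def fun_eq_iff)
    show ?thesis unfolding e has_integral_restrict_UNIV by (rule hi)
  qed
  have "(\<lambda>t. \<bar>indicator {0..1} t * f t\<bar>) \<in> borel_measurable lebesgue \<and>
      (\<integral>\<^sup>+t. ennreal \<bar>indicator {0..1} t * f t\<bar> \<partial>lebesgue) = ennreal (L1norm f) \<and> 0 \<le> L1norm f"
    by (rule has_integral_iff_nn_integral_lebesgue[THEN iffD1, OF _ hU]) simp
  then show ?thesis by blast
qed




lemma stepB:
  fixes r f :: "real \<Rightarrow> real" and k :: nat
  assumes rB[measurable]: "r \<in> borel_measurable borel" and rsupp: "\<And>y. \<bar>y\<bar> > Bz \<Longrightarrow> r y = 0"
    and rbd: "\<And>y. \<bar>r y\<bar> \<le> V"
    and rvar: "\<And>p n. \<forall>i<n. p i \<le> p (Suc i) \<Longrightarrow> (\<Sum>i<n. \<bar>r (p (Suc i)) - r (p i)\<bar>) \<le> V"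
    and k: "k \<ge> 1" and fabs: "f absolutely_integrable_on {0..1}"
  shows "conv r (ext0 (\<lambda>x. f x - ulam k f x)) \<in> borel_measurable lebesgue \<and>
    (\<integral>\<^sup>+x. ennreal \<bar>conv r (ext0 (\<lambda>x. f x - ulam k f x)) x\<bar> \<partial>lebesgue) \<le> ennreal (V / (2 * real k) * L1norm f)"
proof -
  define h where "h = conv r (ext0 (\<lambda>x. f x - ulam k f x))"
  define kk where "kk = real k"
  have kp: "kk > 0" using k unfolding kk_def by simp
  have V0: "0 \<le> V" using rbd[of 0] by simp
  define J where "J j = {real j / kk <..< real (Suc j) / kk}" for j
  define F0 where "F0 t = indicator {0..1} t * f t" for t
  have F0int: "integrable lebesgue F0"
    using fabs unfolding set_integrable_def F0_def by simp
  have F0m[measurable]: "F0 \<in> borel_measurable lebesgue" using F0int by (rule borel_measurable_integrable)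
  define \<phi> where "\<phi> j t = indicator (J j) t * F0 t" for j t
  define A where "A j = kk * integral {real j / kk .. real (Suc j) / kk} f" for j
  define G' where "G' t = (\<Sum>j<k. \<phi> j t - A j * indicator (J j) t)" for t
  define D where "D j = real (Suc j) / kk - real j / kk" for j
  have D: "D j = 1 / kk" for j unfolding D_def using kp by (simp add: field_simps)
  have Dp: "D j > 0" for j using D kp by simp
  have Jsub: "{real j / kk .. real (Suc j) / kk} \<subseteq> {0..1}" if "j < k" for j
    using that kp unfolding kk_def by (auto simp: field_simps)
  have Jm[measurable]: "J j \<in> sets lebesgue" for j unfolding J_def by simp
  have \<phi>m[measurable]: "\<phi> j \<in> borel_measurable lebesgue" for j unfolding \<phi>_def by measurable
  have \<phi>int: "integrable lebesgue (\<phi> j)" for j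
    by (rule Bochner_Integration.integrable_bound[OF F0int]) (auto simp: \<phi>_def indicator_def)
  have Jint: "integrable lebesgue (indicator (J j) :: real \<Rightarrow> real)" for j
  proof -
    have "real j / kk \<le> real (Suc j) / kk" using kp by (simp add: divide_right_mono)
    then show ?thesis unfolding J_def by (intro integrable_real_indicator) auto
  qed
  have Aeq: "A j * D j = (\<integral>t. \<phi> j t \<partial>lebesgue)" if "j < k" for j
  proof -
    have "A j * D j = integral {real j / kk .. real (Suc j) / kk} f"
      unfolding A_def D using kp by simp
    also have "\<dots> = (\<integral>t. \<phi> j t \<partial>lebesgue)"
      unfolding \<phi>_def J_def F0_def
      by (rule interval_integral_eq[OF fabs _ Jsub[OF that]]) (use kp in \<open>simp add: divide_right_mono\<close>)
    finally show ?thesis .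
  qed
  have G'm[measurable]: "G' \<in> borel_measurable lebesgue" unfolding G'_def by measurable
  have G'int: "integrable lebesgue G'" unfolding G'_def using \<phi>int Jint by auto
  have rxm[measurable]: "(\<lambda>t. r (x - t)) \<in> borel_measurable lebesgue" for x
    by (rule borel_leb) measurable
  have Tint: "integrable lebesgue (\<lambda>t. r (x - t) * g t)" if "integrable lebesgue g" for x g
    by (rule Bochner_Integration.integrable_bound[OF integrable_mult_right[OF that, of V]])
       (use that rbd V0 in \<open>auto simp: abs_mult intro!: mult_right_mono borel_measurable_integrable\<close>)
  define Z where "Z = (\<lambda>j. real j / kk) ` {..k}"
  have negZ: "negligible Z" unfolding Z_def by (rule negligible_finite) simp
  have Geq: "ext0 (\<lambda>x. f x - ulam k f x) t = G' t" if "t \<notin> Z" for t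
  proof (cases "t \<in> {0..1}")
    case False
    have "\<phi> j t = 0 \<and> indicator (J j) t = (0::real)" if "j < k" for j
      using Jsub[OF that] False unfolding \<phi>_def F0_def J_def by (auto simp: indicator_def)
    then show ?thesis using False unfolding G'_def ext0_def by auto
  next
    case True
    define j0 where "j0 = nat \<lfloor>t * kk\<rfloor>"
    have tk: "0 \<le> t * kk" "t * kk \<le> kk" using True kp by auto
    have "t * kk \<noteq> real j0"
    proof
      assume "t * kk = real j0"
      then have "t = real j0 / kk" using kp by (simp add: field_simps)
      moreover have "j0 \<le> k" using tk unfolding j0_def kk_def by (simp add: nat_le_iff floor_le_iff)
      ultimately show False using that unfolding Z_def by auto
    qed
    moreover have "real j0 \<le> t * kk" "t * kk < real j0 + 1" using tk unfolding j0_def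
      by (auto simp: of_nat_nat)
    ultimately have jlt: "real j0 < t * kk" "t * kk < real j0 + 1" by auto
    then have tJ: "t \<in> J j0" unfolding J_def using kp by (auto simp: field_simps)
    have j0k: "j0 < k"
    proof -
      have "real j0 < kk" using jlt tk by linarith
      then show ?thesis unfolding kk_def by simp
    qed
    have ul: "ulam k f t = A j0"
      unfolding ulam_def A_def kk_def using True j0k by (simp add: j0_def kk_def Let_def min_def)
    have uniq: "indicator (J j) t = (0::real)" if "j \<noteq> j0" for j
    proof (rule ccontr)
      assume "indicator (J j) t \<noteq> (0::real)"
      then have "t \<in> {real j / real k <..< real (Suc j) / real k}" unfolding J_def kk_def by (auto simp: indicator_def split: if_splits)
      then have "j = nat \<lfloor>t * real k\<rfloor>" by (rule ind_grid_unique[OF k])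
      then show False using that unfolding j0_def kk_def by simp
    qed
    have "G' t = (\<Sum>j<k. if j = j0 then F0 t - A j else 0)"
      unfolding G'_def \<phi>_def
      by (intro sum.cong refl) (auto simp: uniq tJ algebra_simps)
    also have "\<dots> = F0 t - A j0" using j0k by (simp add: sum.delta)
    finally show ?thesis unfolding ext0_def F0_def using True ul by simp
  qed
  have conv_eq: "h x = (\<integral>t. r (x - t) * G' t \<partial>lebesgue)" for x
  proof -
    have "h x = integral UNIV (\<lambda>t. r (x - t) * ext0 (\<lambda>x. f x - ulam k f x) t)"
      unfolding h_def conv_def by simp
    also have "\<dots> = integral UNIV (\<lambda>t. r (x - t) * G' t)"
      by (rule integral_spike[OF negZ]) (use Geq in auto)
    also have "\<dots> = (\<integral>t. r (x - t) * G' t \<partial>lebesgue)"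
      by (rule integral_unique[OF has_integral_integral_lebesgue[OF Tint[OF G'int]]])
    finally show ?thesis .
  qed
  have hm: "h \<in> borel_measurable lebesgue"
  proof -
    have "(\<lambda>x. \<integral>t. r (x - t) * G' t \<partial>lebesgue) \<in> borel_measurable lebesgue"
      using meas_prod2[OF rB G'm] by (intro leb.borel_measurable_lebesgue_integral) (simp add: case_prod_beta')
    then show ?thesis using conv_eq by (simp add: fun_eq_iff[symmetric] cong: measurable_cong)
  qed

  have sum_eq: "h x = (\<Sum>j<k. \<integral>t. r (x - t) * (\<phi> j t - A j * indicator (J j) t) \<partial>lebesgue)" for x
  proof -
    have "h x = (\<integral>t. (\<Sum>j<k. r (x - t) * (\<phi> j t - A j * indicator (J j) t)) \<partial>lebesgue)"
      unfolding conv_eq G'_def by (simp add: sum_distrib_left)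
    also have "\<dots> = (\<Sum>j<k. \<integral>t. r (x - t) * (\<phi> j t - A j * indicator (J j) t) \<partial>lebesgue)"
      by (rule Bochner_Integration.integral_sum) (intro Tint, use \<phi>int Jint in auto)
    finally show ?thesis .
  qed
  define \<Psi> where "\<Psi> j = (\<lambda>p::(real\<times>real)\<times>real. ennreal (\<bar>\<phi> j (snd (fst p))\<bar> * indicator (J j) (snd p) * \<bar>r (fst (fst p) - snd (fst p)) - r (fst (fst p) - snd p)\<bar> / D j))" for j
  have \<Psi>m[measurable]: "\<Psi> j \<in> borel_measurable ((lebesgue \<Otimes>\<^sub>M lebesgue) \<Otimes>\<^sub>M lebesgue)" for j
    unfolding \<Psi>_def by (rule meas_prod3[OF rB \<phi>m]) measurable
  have pw: "ennreal \<bar>h x\<bar> \<le> (\<Sum>j<k. \<integral>\<^sup>+t. \<integral>\<^sup>+s. \<Psi> j ((x, t), s) \<partial>lebesgue \<partial>lebesgue)" for x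
  proof -
    have one: "ennreal \<bar>\<integral>t. r (x - t) * (\<phi> j t - A j * indicator (J j) t) \<partial>lebesgue\<bar> \<le> (\<integral>\<^sup>+t. \<integral>\<^sup>+s. \<Psi> j ((x, t), s) \<partial>lebesgue \<partial>lebesgue)"
      if "j < k" for j
    proof -
      have "ennreal \<bar>\<integral>t. r (x - t) * (\<phi> j t - A j * indicator {real j / kk<..<real (Suc j) / kk} t) \<partial>lebesgue\<bar>
        \<le> (\<integral>\<^sup>+t. \<integral>\<^sup>+s. ennreal (\<bar>\<phi> j t\<bar> * indicator {real j / kk<..<real (Suc j) / kk} s * \<bar>r (x - t) - r (x - s)\<bar> / (real (Suc j) / kk - real j / kk)) \<partial>lebesgue \<partial>lebesgue)"
        by (rule pointwise_j[OF rxm rbd \<phi>int]) (use kp Aeq[OF that] in \<open>auto simp: D_def divide_strict_right_mono\<close>)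
      then show ?thesis unfolding \<Psi>_def J_def D_def by simp
    qed
    have "ennreal \<bar>h x\<bar> \<le> ennreal (\<Sum>j<k. \<bar>\<integral>t. r (x - t) * (\<phi> j t - A j * indicator (J j) t) \<partial>lebesgue\<bar>)"
      unfolding sum_eq by (intro ennreal_leI sum_abs)
    also have "\<dots> = (\<Sum>j<k. ennreal \<bar>\<integral>t. r (x - t) * (\<phi> j t - A j * indicator (J j) t) \<partial>lebesgue\<bar>)"
      by (rule sum_ennreal[symmetric]) simp
    also have "\<dots> \<le> (\<Sum>j<k. \<integral>\<^sup>+t. \<integral>\<^sup>+s. \<Psi> j ((x, t), s) \<partial>lebesgue \<partial>lebesgue)"
      by (intro sum_mono one) simp
    finally show ?thesis .
  qed
  have inner_m: "(\<lambda>x. \<integral>\<^sup>+t. \<integral>\<^sup>+s. \<Psi> j ((x, t), s) \<partial>lebesgue \<partial>lebesgue) \<in> borel_measurable lebesgue" for j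
  proof -
    have "(\<lambda>p. \<integral>\<^sup>+s. \<Psi> j (p, s) \<partial>lebesgue) \<in> borel_measurable (lebesgue \<Otimes>\<^sub>M lebesgue)"
      by (rule leb.borel_measurable_nn_integral_fst) measurable
    then have "(\<lambda>x. \<integral>\<^sup>+t. (\<lambda>p. \<integral>\<^sup>+s. \<Psi> j (p, s) \<partial>lebesgue) (x, t) \<partial>lebesgue) \<in> borel_measurable lebesgue"
      by (rule leb.borel_measurable_nn_integral_fst)
    then show ?thesis by simp
  qed
  have perjt: "(\<integral>\<^sup>+s. \<integral>\<^sup>+x. \<Psi> j ((x, t), s) \<partial>lebesgue \<partial>lebesgue) \<le> ennreal (\<bar>\<phi> j t\<bar> * (V / (2 * kk)))" for j t
  proof (cases "\<phi> j t = 0")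
    case True then show ?thesis unfolding \<Psi>_def by simp
  next
    case False
    then have tJ: "t \<in> J j" unfolding \<phi>_def by (auto simp: indicator_def split: if_splits)
    have "(\<integral>\<^sup>+s. \<integral>\<^sup>+x. \<Psi> j ((x, t), s) \<partial>lebesgue \<partial>lebesgue) \<le>
          (\<integral>\<^sup>+s. ennreal (\<bar>\<phi> j t\<bar> * V * kk) * ennreal (indicator (J j) s * \<bar>t - s\<bar>) \<partial>lebesgue)"
    proof (rule nn_integral_mono)
      fix s :: real
      have c0: "0 \<le> \<bar>\<phi> j t\<bar> * indicator (J j) s / D j" using Dp[of j] by simp
      have "(\<integral>\<^sup>+x. \<Psi> j ((x, t), s) \<partial>lebesgue) = (\<integral>\<^sup>+x. ennreal (\<bar>\<phi> j t\<bar> * indicator (J j) s / D j) * ennreal \<bar>r (x - t) - r (x - s)\<bar> \<partial>lebesgue)"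
        unfolding \<Psi>_def by (intro nn_integral_cong, subst ennreal_mult'[OF c0, symmetric], rule arg_cong[where f=ennreal]) simp
      also have "\<dots> = ennreal (\<bar>\<phi> j t\<bar> * indicator (J j) s / D j) * (\<integral>\<^sup>+x. ennreal \<bar>r (x - t) - r (x - s)\<bar> \<partial>lebesgue)"
        by (rule nn_integral_cmult) (intro measurable_compose[OF _ measurable_ennreal] borel_leb, measurable)
      also have "\<dots> \<le> ennreal (\<bar>\<phi> j t\<bar> * indicator (J j) s / D j) * ennreal (\<bar>t - s\<bar> * V)"
        by (intro mult_left_mono l1_shift[OF rB rsupp rvar]) auto
      also have "\<dots> = ennreal (\<bar>\<phi> j t\<bar> * V * kk) * ennreal (indicator (J j) s * \<bar>t - s\<bar>)"
        using c0 V0 kp by (simp add: ennreal_mult'[symmetric] D field_simps)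
      finally show "(\<integral>\<^sup>+x. \<Psi> j ((x, t), s) \<partial>lebesgue) \<le> ennreal (\<bar>\<phi> j t\<bar> * V * kk) * ennreal (indicator (J j) s * \<bar>t - s\<bar>)" .
    qed
    also have "\<dots> = ennreal (\<bar>\<phi> j t\<bar> * V * kk) * (\<integral>\<^sup>+s. ennreal (indicator (J j) s * \<bar>t - s\<bar>) \<partial>lebesgue)"
      by (rule nn_integral_cmult) measurable
    also have "\<dots> \<le> ennreal (\<bar>\<phi> j t\<bar> * V * kk) * ennreal ((real (Suc j) / kk - real j / kk)^2 / 2)"
      unfolding J_def by (intro mult_left_mono dist_int) (use tJ in \<open>auto simp: J_def\<close>)
    also have "\<dots> = ennreal (\<bar>\<phi> j t\<bar> * (V / (2 * kk)))"
      using V0 kp by (simp add: ennreal_mult'[symmetric] D[unfolded D_def] power2_eq_square field_simps)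
    finally show ?thesis .
  qed
  have "(\<integral>\<^sup>+x. ennreal \<bar>h x\<bar> \<partial>lebesgue) \<le> (\<integral>\<^sup>+x. (\<Sum>j<k. \<integral>\<^sup>+t. \<integral>\<^sup>+s. \<Psi> j ((x, t), s) \<partial>lebesgue \<partial>lebesgue) \<partial>lebesgue)"
    by (rule nn_integral_mono) (rule pw)
  also have "\<dots> = (\<Sum>j<k. \<integral>\<^sup>+x. \<integral>\<^sup>+t. \<integral>\<^sup>+s. \<Psi> j ((x, t), s) \<partial>lebesgue \<partial>lebesgue \<partial>lebesgue)"
    by (rule nn_integral_sum) (rule inner_m)
  also have "\<dots> = (\<Sum>j<k. \<integral>\<^sup>+t. \<integral>\<^sup>+s. \<integral>\<^sup>+x. \<Psi> j ((x, t), s) \<partial>lebesgue \<partial>lebesgue \<partial>lebesgue)"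
    by (intro sum.cong refl tonelli3 \<Psi>m)
  also have "\<dots> \<le> (\<Sum>j<k. \<integral>\<^sup>+t. ennreal (\<bar>\<phi> j t\<bar> * (V / (2 * kk))) \<partial>lebesgue)"
    by (intro sum_mono nn_integral_mono perjt)
  also have "\<dots> = (\<integral>\<^sup>+t. (\<Sum>j<k. ennreal (\<bar>\<phi> j t\<bar> * (V / (2 * kk)))) \<partial>lebesgue)"
    by (rule nn_integral_sum[symmetric]) measurable
  also have "\<dots> \<le> (\<integral>\<^sup>+t. ennreal (V / (2 * kk)) * ennreal \<bar>indicator {0..1} t * f t\<bar> \<partial>lebesgue)"
  proof (rule nn_integral_mono)
    fix t :: real
    have e1: "\<bar>\<phi> j t\<bar> * (V / (2 * kk)) = indicator (J j) t * (\<bar>F0 t\<bar> * (V / (2 * kk)))" for j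
      by (simp add: \<phi>_def abs_mult)
    have "(\<Sum>j<k. \<bar>\<phi> j t\<bar> * (V / (2 * kk))) = (\<Sum>j<k. indicator (J j) t) * (\<bar>F0 t\<bar> * (V / (2 * kk)))"
      unfolding e1 by (rule sum_distrib_right[symmetric])
    also have "\<dots> \<le> 1 * (\<bar>F0 t\<bar> * (V / (2 * kk)))"
      using ind_sum_le[OF k, of t] V0 kp unfolding J_def kk_def
      by (intro mult_right_mono) auto
    finally have le: "(\<Sum>j<k. \<bar>\<phi> j t\<bar> * (V / (2 * kk))) \<le> \<bar>F0 t\<bar> * (V / (2 * kk))" by simp
    have "(\<Sum>j<k. ennreal (\<bar>\<phi> j t\<bar> * (V / (2 * kk)))) = ennreal (\<Sum>j<k. \<bar>\<phi> j t\<bar> * (V / (2 * kk)))"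
      using V0 kp by (intro sum_ennreal) simp
    also have "\<dots> \<le> ennreal (\<bar>F0 t\<bar> * (V / (2 * kk)))" using le by (rule ennreal_leI)
    also have "\<dots> = ennreal (V / (2 * kk)) * ennreal \<bar>indicator {0..1} t * f t\<bar>"
      unfolding F0_def using V0 kp by (simp add: ennreal_mult'[symmetric] mult.commute)
    finally show "(\<Sum>j<k. ennreal (\<bar>\<phi> j t\<bar> * (V / (2 * kk)))) \<le> ennreal (V / (2 * kk)) * ennreal \<bar>indicator {0..1} t * f t\<bar>" .
  qed
  also have "\<dots> = ennreal (V / (2 * kk)) * (\<integral>\<^sup>+t. ennreal \<bar>indicator {0..1} t * f t\<bar> \<partial>lebesgue)"
    by (rule nn_integral_cmult) (intro measurable_compose[OF _ measurable_ennreal] borel_measurable_abs F0m[unfolded F0_def])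
  also have "\<dots> = ennreal (V / (2 * real k) * L1norm f)"
    unfolding L1norm_nn[OF fabs] kk_def using V0 by (simp add: ennreal_mult'[symmetric])
  finally show ?thesis using hm unfolding h_def by simp
qed




theorem proposition76:
  fixes \<rho> :: "real \<Rightarrow> real" and k :: nat and \<xi> :: real
  assumes bv: "bounded_variation \<rho>"
    and supp: "\<And>x. x \<notin> {-1/2..1/2} \<Longrightarrow> \<rho> x = 0"
    and int1: "(\<rho> has_integral 1) UNIV"
    and k: "k \<ge> 1"
    and xi: "\<xi> > 0"
  shows "\<forall>f. f absolutely_integrable_on {0..1} \<longrightarrow>
           L1norm (N_op \<rho> \<xi> (\<lambda>x. f x - ulam k f x))
             \<le> 1/2 * (1 / real k) * (1 / \<xi>) * Var \<rho> * L1norm f"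
proof (intro allI impI)
  fix f :: "real \<Rightarrow> real"
  assume fabs: "f absolutely_integrable_on {0..1}"
  define r where "r = rho_scaled \<rho> \<xi>"
  define V where "V = Var \<rho> / \<xi>"
  have \<rho>B[measurable]: "\<rho> \<in> borel_measurable borel" by (rule bv_borel[OF bv])
  have rB: "r \<in> borel_measurable borel" unfolding r_def rho_scaled_def by measurable
  have rsupp: "r y = 0" if "\<bar>y\<bar> > \<xi> / 2" for y
  proof -
    have "\<bar>y / \<xi>\<bar> > 1/2" using that xi by (simp add: field_simps abs_div)
    then have "y / \<xi> \<notin> {-1/2..1/2}" by auto
    then show ?thesis unfolding r_def rho_scaled_def using supp by simp
  qed
  have rbd: "\<bar>r y\<bar> \<le> V" for y
    unfolding r_def rho_scaled_def V_def using rho_bound[OF bv supp, of "y / \<xi>"] xi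
    by (simp add: abs_div divide_right_mono)
  have rvar: "(\<Sum>i<n. \<bar>r (p (Suc i)) - r (p i)\<bar>) \<le> V" if "\<forall>i<n. p i \<le> p (Suc i)" for p n
    unfolding r_def V_def by (rule rs_var[OF bv xi that])
  define h where "h = conv r (ext0 (\<lambda>x. f x - ulam k f x))"
  have B: "h \<in> borel_measurable lebesgue \<and> (\<integral>\<^sup>+x. ennreal \<bar>h x\<bar> \<partial>lebesgue) \<le> ennreal (V / (2 * real k) * L1norm f)"
    unfolding h_def by (rule stepB[OF rB _ rbd rvar k fabs, of "\<xi> / 2"]) (use rsupp in auto)
  have hsupp: "h x = 0" if "\<bar>x\<bar> > 1 + \<xi> / 2" for x
  proof -
    have "r (x - t) * ext0 (\<lambda>x. f x - ulam k f x) t = 0" for t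
    proof (cases "t \<in> {0..1}")
      case True
      have "\<bar>x\<bar> \<le> \<bar>x - t\<bar> + \<bar>t\<bar>" using abs_triangle_ineq[of "x - t" t] by simp
      then have "\<bar>x - t\<bar> > \<xi> / 2" using that True by auto
      then show ?thesis using rsupp by simp
    next
      case False then show ?thesis by (auto simp: ext0_def)
    qed
    then have "(\<lambda>t. r (x - t) * ext0 (\<lambda>x. f x - ulam k f x) t) = (\<lambda>t. 0)" by (rule ext)
    then show ?thesis unfolding h_def conv_def by simp
  qed
  have L0: "0 \<le> L1norm f"
  proof -
    have "(\<lambda>x. norm (f x)) integrable_on {0..1}" using fabs absolutely_integrable_on_def by blast
    then show ?thesis unfolding L1norm_def by (intro integral_nonneg) auto
  qed
  have V0: "0 \<le> V" unfolding V_def using Var_nonneg[OF bv] xi by simp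
  have "L1norm (pushforward_pi h) \<le> V / (2 * real k) * L1norm f"
    by (rule stepA[of h "1 + \<xi> / 2"]) (use B hsupp L0 V0 in auto)
  moreover have "N_op \<rho> \<xi> (\<lambda>x. f x - ulam k f x) = pushforward_pi h"
    unfolding N_op_def h_def r_def ..
  moreover have "V / (2 * real k) * L1norm f = 1/2 * (1 / real k) * (1 / \<xi>) * Var \<rho> * L1norm f"
    unfolding V_def by (simp add: field_simps)
  ultimately show "L1norm (N_op \<rho> \<xi> (\<lambda>x. f x - ulam k f x)) \<le> 1/2 * (1 / real k) * (1 / \<xi>) * Var \<rho> * L1norm f"
    by simp
qed


end
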